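(* Let $k\ge 1$ be an integer and let $G$ be a bipartite graph with bipartition $V(G)=A\cup B$, $|A|=k$, $|B|=k+1$, such that every $v\in A$ has $\deg(v)\ge 1$ and $\deg(v)>\deg(u)$ for every $u\in N(v)$. Then $G=K_{k,k+1}$ (i.e., every vertex of $A$ is adjacent to every vertex of $B$).
   Context: Degrees and neighborhoods $N(v)$ are taken in $G$. *)

theory Defs
  imports Main
begin

definition simple_graph :: "'a set \<Rightarrow> ('a \<Rightarrow> 'a \<Rightarrow> bool) \<Rightarrow> bool" where
  "simple_graph V E \<longleftrightarrow> finite V \<and> (\<forall>u v. E u v \<longrightarrow> E v u) \<and> (\<forall>v. \<not> E v v)
     \<and> (\<forall>u v. E u v \<longrightarrow> u \<in> V \<and> v \<in> V)"

definition neighbours :: "'a set \<Rightarrow> ('a \<Rightarrow> 'a \<Rightarrow> bool) \<Rightarrow> 'a \<Rightarrow> 'a set" where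
  "neighbours V E v = {u \<in> V. E v u}"

definition degree :: "'a set \<Rightarrow> ('a \<Rightarrow> 'a \<Rightarrow> bool) \<Rightarrow> 'a \<Rightarrow> nat" where
  "degree V E v = card (neighbours V E v)"

definition bipartition :: "'a set \<Rightarrow> ('a \<Rightarrow> 'a \<Rightarrow> bool) \<Rightarrow> 'a set \<Rightarrow> 'a set \<Rightarrow> bool" where
  "bipartition V E A B \<longleftrightarrow> V = A \<union> B \<and> A \<inter> B = {}
     \<and> (\<forall>u v. E u v \<longrightarrow> (u \<in> A \<and> v \<in> B) \<or> (u \<in> B \<and> v \<in> A))"

end

theory Submission
  imports Defs Complex_Main
begin

theorem lemma3p3:
  fixes V A B :: "'a set" and E :: "'a \<Rightarrow> 'a \<Rightarrow> bool" and k :: nat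
  assumes "k \<ge> 1"
    and "simple_graph V E"
    and "bipartition V E A B"
    and "card A = k" and "card B = k + 1"
    and "\<forall>v\<in>A. degree V E v \<ge> 1"
    and "\<forall>v\<in>A. \<forall>u\<in>neighbours V E v. degree V E v > degree V E u"
  shows "\<forall>a\<in>A. \<forall>b\<in>B. E a b"
proof -
  note sg = assms(2)[unfolded simple_graph_def]
  note bp = assms(3)[unfolded bipartition_def]
  have finV: "finite V" using sg by blast
  have finA: "finite A" and finB: "finite B" using bp finV by auto
  define NA where "NA a = {b\<in>B. E a b}" for a
  define NB where "NB b = {a\<in>A. E a b}" for b
  have nA: "neighbours V E a = NA a" if "a \<in> A" for a
    using that sg bp unfolding neighbours_def NA_def by blast
  have nB: "neighbours V E b = NB b" if "b \<in> B" for b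
    using that sg bp unfolding neighbours_def NB_def by blast
  have finNA: "finite (NA a)" for a using finB unfolding NA_def by auto
  have finNB: "finite (NB b)" for b using finA unfolding NB_def by auto
  have NAB: "NA a \<subseteq> B" for a unfolding NA_def by auto
  have cNA_le: "card (NA a) \<le> k + 1" for a
    using card_mono[OF finB NAB] assms(5) by simp
  have key: "\<forall>b\<in>NA a. 1 \<le> card (NB b) \<and> card (NB b) + 1 \<le> card (NA a)" if a: "a \<in> A" for a
  proof
    fix b assume b: "b \<in> NA a"
    have bB: "b \<in> B" using b NA_def by auto
    have "a \<in> NB b" using a b unfolding NA_def NB_def by auto
    hence "1 \<le> card (NB b)" using finNB[of b] by (metis One_nat_def Suc_leI card_gt_0_iff empty_iff)
    moreover have "card (NB b) < card (NA a)"
      using assms(7) a b nA[OF a] nB[OF bB] unfolding degree_def by metis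
    ultimately show "1 \<le> card (NB b) \<and> card (NB b) + 1 \<le> card (NA a)" by simp
  qed
  have nonempty: "NA a \<noteq> {}" if "a \<in> A" for a
    using assms(6) that nA[OF that] unfolding degree_def by auto
  have cNA2: "2 \<le> card (NA a)" if a: "a \<in> A" for a
  proof -
    obtain b where "b \<in> NA a" using nonempty[OF a] by auto
    thus ?thesis using key[OF a] by fastforce
  qed
  define f :: "'a \<Rightarrow> 'a \<Rightarrow> real" where "f a b = 1 / real (card (NB b)) - 1 / real (card (NA a))" for a b
  have pera: "(\<Sum>b\<in>NA a. f a b) \<ge> 1 / (real (card (NA a)) - 1)" if a: "a \<in> A" for a
  proof -
    let ?d = "real (card (NA a))"
    have d2: "?d \<ge> 2" using cNA2[OF a] by simp
    have "(\<Sum>b\<in>NA a. f a b) \<ge> (\<Sum>b\<in>NA a. 1/(?d - 1) - 1/?d)"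
    proof (rule sum_mono)
      fix b assume b: "b \<in> NA a"
      have h: "1 \<le> real (card (NB b))" "real (card (NB b)) \<le> ?d - 1"
        using key[OF a] b by auto
      have "1/(?d - 1) \<le> 1 / real (card (NB b))"
        using h by (intro divide_left_mono) auto
      thus "1/(?d - 1) - 1/?d \<le> f a b" unfolding f_def by simp
    qed
    also have "(\<Sum>b\<in>NA a. 1/(?d - 1) - 1/?d) = ?d * (1/(?d - 1) - 1/?d)" by simp
    also have "\<dots> = 1 / (?d - 1)" using d2 by (simp add: field_simps)
    finally show ?thesis .
  qed
  have sum2: "(\<Sum>a\<in>A. \<Sum>b\<in>NA a. 1 / real (card (NA a))) = real k"
  proof -
    have "(\<Sum>a\<in>A. \<Sum>b\<in>NA a. 1 / real (card (NA a))) = (\<Sum>a\<in>A. 1)"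
    proof (rule sum.cong)
      fix a assume a: "a \<in> A"
      show "(\<Sum>b\<in>NA a. 1 / real (card (NA a))) = 1" using cNA2[OF a] by simp
    qed simp
    thus ?thesis using assms(4) by simp
  qed
  have sum1: "(\<Sum>a\<in>A. \<Sum>b\<in>NA a. 1 / real (card (NB b))) \<le> real k + 1"
  proof -
    have "(\<Sum>a\<in>A. \<Sum>b\<in>NA a. 1 / real (card (NB b)))
        = (\<Sum>b\<in>B. \<Sum>a\<in>NB b. 1 / real (card (NB b)))"
      unfolding NA_def NB_def by (rule sum.swap_restrict[OF finA finB])
    also have "\<dots> \<le> (\<Sum>b\<in>B. 1)"
    proof (rule sum_mono)
      fix b assume "b \<in> B"
      show "(\<Sum>a\<in>NB b. 1 / real (card (NB b))) \<le> 1"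
        by (cases "card (NB b) = 0") auto
    qed
    also have "\<dots> = real k + 1" using assms(5) by simp
    finally show ?thesis .
  qed
  have total: "(\<Sum>a\<in>A. \<Sum>b\<in>NA a. f a b) \<le> 1"
    using sum1 sum2 unfolding f_def by (simp add: sum_subtractf)
  have all: "card (NA a) = k + 1" if a: "a \<in> A" for a
  proof (rule ccontr)
    assume ne: "card (NA a) \<noteq> k + 1"
    have lt: "\<forall>x\<in>A. 1 / real k \<le> (\<Sum>b\<in>NA x. f x b)"
    proof
      fix x assume x: "x \<in> A"
      have "real (card (NA x)) - 1 \<le> real k" using cNA_le[of x] by simp
      moreover have "real (card (NA x)) - 1 > 0" using cNA2[OF x] by simp
      ultimately have "1 / real k \<le> 1 / (real (card (NA x)) - 1)"
        by (intro divide_left_mono) auto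
      thus "1 / real k \<le> (\<Sum>b\<in>NA x. f x b)" using pera[OF x] by linarith
    qed
    have "real (card (NA a)) - 1 < real k" using cNA_le[of a] ne by simp
    moreover have "real (card (NA a)) - 1 > 0" using cNA2[OF a] by simp
    ultimately have "1 / real k < 1 / (real (card (NA a)) - 1)"
      by (intro divide_strict_left_mono) auto
    hence strict: "1 / real k < (\<Sum>b\<in>NA a. f a b)" using pera[OF a] by linarith
    have "(\<Sum>x\<in>A. 1 / real k) < (\<Sum>x\<in>A. \<Sum>b\<in>NA x. f x b)"
      by (rule sum_strict_mono_ex1[OF finA lt]) (use a strict in blast)
    moreover have "(\<Sum>x\<in>A. 1 / real k) = 1" using assms(1,4) by simp
    ultimately show False using total by linarith
  qed
  show ?thesis
  proof (intro ballI)
    fix a b assume a: "a \<in> A" and b: "b \<in> B"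
    have "NA a = B" using card_subset_eq[OF finB NAB] all[OF a] assms(5) by simp
    thus "E a b" using b NA_def by auto
  qed
qed

end
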